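(* Let $(R,[\cdot_\lambda\cdot])$ be a Lie conformal superalgebra and let $\alpha,\beta:R\to R$ be two even, commuting linear maps such that $\alpha\partial=\partial\alpha$, $\beta\partial=\partial\beta$, $\alpha([a_\lambda b])=[\alpha(a)_\lambda\alpha(b)]$ and $\beta([a_\lambda b])=[\beta(a)_\lambda\beta(b)]$ for all $a,b\in R$. Define a $\mathbb{C}$-linear map $R\otimes R\to R[\lambda]$ by $[a_\lambda b]'=[\alpha(a)_\lambda\beta(b)]$. Then $(R,[\cdot_\lambda\cdot]',\alpha,\beta)$ is a BiHom-Lie conformal superalgebra.
   Context: All spaces are over $\mathbb{C}$. For a $\mathbb{C}[\partial]$-module $V$, $V[\lambda]=\mathbb{C}[\lambda]\otimes V$. In a $\mathbb{Z}_2$-graded space, $|a|$ denotes the parity of a homogeneous element; identities involving $|a|$ are required for homogeneous elements. In an expression $[x_{-\lambda-\partial}y]$ one writes $[x_\lambda y]=\sum_n\lambda^n c_n$ and replaces $\lambda$ by $-\lambda-\partial$, with $\partial$ acting on the coefficients $c_n$. A Lie conformal superalgebra is a $\mathbb{Z}_2$-graded $\mathbb{C}[\partial]$-module $R=R_0\oplus R_1$ with a $\mathbb{C}$-linear map $R\otimes R\to R[\lambda]$, $a\otimes b\mapsto[a_\lambda b]$, with $[R_{i\,\lambda}R_j]\subseteq R_{i+j}[\lambda]$, satisfying $[(\partial a)_\lambda b]=-\lambda[a_\lambda b]$, $[a_\lambda(\partial b)]=(\partial+\lambda)[a_\lambda b]$, $[a_\lambda b]=-(-1)^{|a||b|}[b_{-\partial-\lambda}a]$,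 and $[a_\lambda[b_\mu c]]=[[a_\lambda b]_{\lambda+\mu}c]+(-1)^{|a||b|}[b_\mu[a_\lambda c]]$. A BiHom-Lie conformal superalgebra $(R,[\cdot_\lambda\cdot],\alpha,\beta)$ is a $\mathbb{Z}_2$-graded $\mathbb{C}[\partial]$-module $R=R_0\oplus R_1$ with two commuting linear maps $\alpha,\beta:R\to R$ and a $\mathbb{C}$-linear map $R\otimes R\to R[\lambda]$, $a\otimes b\mapsto[a_\lambda b]$, with $[R_{i\,\lambda}R_j]\subseteq R_{i+j}[\lambda]$ ($i,j\in\mathbb{Z}_2$), such that for all homogeneous $a,b,c\in R$: (1) $\alpha\partial=\partial\alpha$, $\beta\partial=\partial\beta$; (2) $\alpha([a_\lambda b])=[\alpha(a)_\lambda\alpha(b)]$, $\beta([a_\lambda b])=[\beta(a)_\lambda\beta(b)]$; (3) $[(\partial a)_\lambda b]=-\lambda[a_\lambda b]$, $[a_\lambda(\partial b)]=(\partial+\lambda)[a_\lambda b]$; (4) $[\beta(a)_\lambda\alpha(b)]=-(-1)^{|a||b|}[\beta(b)_{-\lambda-\partial}\alpha(a)]$; (5) $[\alpha\beta(a)_\lambda[b_\mu c]]=[[\beta(a)_\lambda b]_{\lambda+\mu}\beta(c)]+(-1)^{|a||b|}[\beta(b)_\mu[\alpha(a)_\lambda c]]$. *)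

theory Defs
  imports Complex_Main
begin

text \<open>
  The underlying complex vector space R is a type 'a together with a
  scalar multiplication scl :: complex => 'a => 'a satisfying vector_space scl.
  The operator partial is D :: 'a => 'a.  The Z2-grading is Rg :: bool => 'a set
  (Rg False = R_0, Rg True = R_1); parity addition is inequality (xor).
  An element of R[lambda] is represented by its coefficient sequence c :: nat => 'a
  (finite support), c n being the coefficient of lambda^n.  A lambda-bracket is
  br :: 'a => 'a => nat => 'a, br a b n being the n-th coefficient of [a_lambda b].
  Polynomial identities in R[lambda] (resp. R[lambda,mu]) are stated by evaluating
  the formal variables at all complex numbers.
\<close>

definition ev :: "(complex \<Rightarrow> 'a \<Rightarrow> 'a::ab_group_add) \<Rightarrow> (nat \<Rightarrow> 'a) \<Rightarrow> complex \<Rightarrow> 'a" where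
  "ev scl c l = (\<Sum>n\<in>{n. c n \<noteq> 0}. scl (l ^ n) (c n))"

text \<open>Evaluation of sum_n lambda^n c_n at lambda := -lambda-D (D acting on the coefficients).\<close>
definition evop :: "(complex \<Rightarrow> 'a \<Rightarrow> 'a::ab_group_add) \<Rightarrow> ('a \<Rightarrow> 'a) \<Rightarrow> (nat \<Rightarrow> 'a) \<Rightarrow> complex \<Rightarrow> 'a" where
  "evop scl D c l = (\<Sum>n\<in>{n. c n \<noteq> 0}. ((\<lambda>x. - scl l x - D x) ^^ n) (c n))"

definition psign :: "bool \<Rightarrow> bool \<Rightarrow> complex" where
  "psign i j = (if i \<and> j then -1 else 1)"

definition graded_CD_module :: "(complex \<Rightarrow> 'a \<Rightarrow> 'a::ab_group_add) \<Rightarrow> ('a \<Rightarrow> 'a) \<Rightarrow> (bool \<Rightarrow> 'a set) \<Rightarrow> bool" where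
  "graded_CD_module scl D Rg \<longleftrightarrow>
     vector_space scl \<and> Vector_Spaces.linear scl scl D \<and>
     (\<forall>i. module.subspace scl (Rg i)) \<and>
     Rg False \<inter> Rg True = {0} \<and>
     (\<forall>x. \<exists>y z. y \<in> Rg False \<and> z \<in> Rg True \<and> x = y + z) \<and>
     (\<forall>i. D ` Rg i \<subseteq> Rg i)"

definition graded_lambda_map :: "(complex \<Rightarrow> 'a \<Rightarrow> 'a::ab_group_add) \<Rightarrow> (bool \<Rightarrow> 'a set) \<Rightarrow> ('a \<Rightarrow> 'a \<Rightarrow> nat \<Rightarrow> 'a) \<Rightarrow> bool" where
  "graded_lambda_map scl Rg br \<longleftrightarrow>
     (\<forall>a b. finite {n. br a b n \<noteq> 0}) \<and>
     (\<forall>a n. Vector_Spaces.linear scl scl (\<lambda>b. br a b n)) \<and>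
     (\<forall>b n. Vector_Spaces.linear scl scl (\<lambda>a. br a b n)) \<and>
     (\<forall>i j a b n. a \<in> Rg i \<longrightarrow> b \<in> Rg j \<longrightarrow> br a b n \<in> Rg (i \<noteq> j))"

definition sesquilinear :: "(complex \<Rightarrow> 'a \<Rightarrow> 'a::ab_group_add) \<Rightarrow> ('a \<Rightarrow> 'a) \<Rightarrow> ('a \<Rightarrow> 'a \<Rightarrow> nat \<Rightarrow> 'a) \<Rightarrow> bool" where
  "sesquilinear scl D br \<longleftrightarrow>
     (\<forall>a b l. ev scl (br (D a) b) l = - scl l (ev scl (br a b) l)) \<and>
     (\<forall>a b l. ev scl (br a (D b)) l = D (ev scl (br a b) l) + scl l (ev scl (br a b) l))"

definition LCSA :: "(complex \<Rightarrow> 'a \<Rightarrow> 'a::ab_group_add) \<Rightarrow> ('a \<Rightarrow> 'a) \<Rightarrow> (bool \<Rightarrow> 'a set) \<Rightarrow> ('a \<Rightarrow> 'a \<Rightarrow> nat \<Rightarrow> 'a) \<Rightarrow> bool" where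
  "LCSA scl D Rg br \<longleftrightarrow>
     graded_CD_module scl D Rg \<and> graded_lambda_map scl Rg br \<and> sesquilinear scl D br \<and>
     (\<forall>i j a b l. a \<in> Rg i \<longrightarrow> b \<in> Rg j \<longrightarrow>
        ev scl (br a b) l = - scl (psign i j) (evop scl D (br b a) l)) \<and>
     (\<forall>i j k a b c l m. a \<in> Rg i \<longrightarrow> b \<in> Rg j \<longrightarrow> c \<in> Rg k \<longrightarrow>
        ev scl (br a (ev scl (br b c) m)) l =
          ev scl (br (ev scl (br a b) l) c) (l + m)
          + scl (psign i j) (ev scl (br b (ev scl (br a c) l)) m))"

definition BiHom_LCSA :: "(complex \<Rightarrow> 'a \<Rightarrow> 'a::ab_group_add) \<Rightarrow> ('a \<Rightarrow> 'a) \<Rightarrow> (bool \<Rightarrow> 'a set) \<Rightarrow> ('a \<Rightarrow> 'a \<Rightarrow> nat \<Rightarrow> 'a)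
     \<Rightarrow> ('a \<Rightarrow> 'a) \<Rightarrow> ('a \<Rightarrow> 'a) \<Rightarrow> bool" where
  "BiHom_LCSA scl D Rg br \<alpha> \<beta> \<longleftrightarrow>
     graded_CD_module scl D Rg \<and> graded_lambda_map scl Rg br \<and>
     Vector_Spaces.linear scl scl \<alpha> \<and> Vector_Spaces.linear scl scl \<beta> \<and> \<alpha> \<circ> \<beta> = \<beta> \<circ> \<alpha> \<and>
     \<alpha> \<circ> D = D \<circ> \<alpha> \<and> \<beta> \<circ> D = D \<circ> \<beta> \<and>
     (\<forall>a b n. \<alpha> (br a b n) = br (\<alpha> a) (\<alpha> b) n) \<and>
     (\<forall>a b n. \<beta> (br a b n) = br (\<beta> a) (\<beta> b) n) \<and>
     sesquilinear scl D br \<and>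
     (\<forall>i j a b l. a \<in> Rg i \<longrightarrow> b \<in> Rg j \<longrightarrow>
        ev scl (br (\<beta> a) (\<alpha> b)) l = - scl (psign i j) (evop scl D (br (\<beta> b) (\<alpha> a)) l)) \<and>
     (\<forall>i j k a b c l m. a \<in> Rg i \<longrightarrow> b \<in> Rg j \<longrightarrow> c \<in> Rg k \<longrightarrow>
        ev scl (br (\<alpha> (\<beta> a)) (ev scl (br b c) m)) l =
          ev scl (br (ev scl (br (\<beta> a) b) l) (\<beta> c)) (l + m)
          + scl (psign i j) (ev scl (br (\<beta> b) (ev scl (br (\<alpha> a) c) l)) m))"

end

theory Submission
  imports Defs
begin

lemma ev_superset:
  assumes vs: "vector_space scl" and fin: "finite S" and sub: "{n. c n \<noteq> 0} \<subseteq> S"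
  shows "ev scl c l = (\<Sum>n\<in>S. scl (l ^ n) (c n))"
  unfolding ev_def
  by (rule sum.mono_neutral_left[OF fin sub]) (use module.scale_zero_right[OF vs[folded module_iff_vector_space]] in auto)

lemma ev_linear:
  assumes lin: "Vector_Spaces.linear scl scl f" and fin: "finite {n. c n \<noteq> 0}"
  shows "f (ev scl c l) = ev scl (\<lambda>n. f (c n)) l"
proof -
  have mh: "module_hom scl scl f" using lin by (simp add: module_hom_iff_linear)
  have vs: "vector_space scl" using mh by (simp add: module_hom_def module_iff_vector_space)
  have "f (ev scl c l) = (\<Sum>n\<in>{n. c n \<noteq> 0}. f (scl (l ^ n) (c n)))"
    unfolding ev_def by (rule module_hom.sum[OF mh])
  also have "\<dots> = (\<Sum>n\<in>{n. c n \<noteq> 0}. scl (l ^ n) (f (c n)))"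
    by (simp add: module_hom.scale[OF mh])
  also have "\<dots> = ev scl (\<lambda>n. f (c n)) l"
    by (rule ev_superset[OF vs fin, symmetric]) (use module_hom.zero[OF mh] in auto)
  finally show ?thesis .
qed

theorem mainTheorem1:
  fixes scl :: "complex \<Rightarrow> 'a::ab_group_add \<Rightarrow> 'a"
    and D :: "'a \<Rightarrow> 'a" and Rg :: "bool \<Rightarrow> 'a set"
    and br :: "'a \<Rightarrow> 'a \<Rightarrow> nat \<Rightarrow> 'a"
    and \<alpha> \<beta> :: "'a \<Rightarrow> 'a"
  assumes "LCSA scl D Rg br"
    and "Vector_Spaces.linear scl scl \<alpha>" and "Vector_Spaces.linear scl scl \<beta>"
    and "\<forall>i. \<alpha> ` Rg i \<subseteq> Rg i" and "\<forall>i. \<beta> ` Rg i \<subseteq> Rg i"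
    and "\<alpha> \<circ> \<beta> = \<beta> \<circ> \<alpha>"
    and "\<alpha> \<circ> D = D \<circ> \<alpha>" and "\<beta> \<circ> D = D \<circ> \<beta>"
    and "\<forall>a b n. \<alpha> (br a b n) = br (\<alpha> a) (\<alpha> b) n"
    and "\<forall>a b n. \<beta> (br a b n) = br (\<beta> a) (\<beta> b) n"
  shows "BiHom_LCSA scl D Rg (\<lambda>a b. br (\<alpha> a) (\<beta> b)) \<alpha> \<beta>"
proof -
  note L = assms(1)[unfolded LCSA_def]
  have gm: "graded_CD_module scl D Rg" using L by blast
  have gl: "graded_lambda_map scl Rg br" using L by blast
  have ses: "sesquilinear scl D br" using L by blast
  have skew: "\<forall>i j a b l. a \<in> Rg i \<longrightarrow> b \<in> Rg j \<longrightarrow>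
        ev scl (br a b) l = - scl (psign i j) (evop scl D (br b a) l)" using L by blast
  have jac: "\<forall>i j k a b c l m. a \<in> Rg i \<longrightarrow> b \<in> Rg j \<longrightarrow> c \<in> Rg k \<longrightarrow>
        ev scl (br a (ev scl (br b c) m)) l =
          ev scl (br (ev scl (br a b) l) c) (l + m)
          + scl (psign i j) (ev scl (br b (ev scl (br a c) l)) m)" using L by blast
  have fin: "\<And>a b. finite {n. br a b n \<noteq> 0}" using gl by (simp add: graded_lambda_map_def)
  have linb: "\<And>a n. Vector_Spaces.linear scl scl (\<lambda>b. br a b n)" using gl by (simp add: graded_lambda_map_def)
  have lina: "\<And>b n. Vector_Spaces.linear scl scl (\<lambda>a. br a b n)" using gl by (simp add: graded_lambda_map_def)
  have grd: "\<And>i j a b n. a \<in> Rg i \<Longrightarrow> b \<in> Rg j \<Longrightarrow> br a b n \<in> Rg (i \<noteq> j)"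
    using gl by (simp add: graded_lambda_map_def)
  have ab: "\<And>x. \<alpha> (\<beta> x) = \<beta> (\<alpha> x)" using assms(6) by (metis comp_apply)
  have aD: "\<And>x. \<alpha> (D x) = D (\<alpha> x)" using assms(7) by (metis comp_apply)
  have bD: "\<And>x. \<beta> (D x) = D (\<beta> x)" using assms(8) by (metis comp_apply)
  have ga: "\<And>x i. x \<in> Rg i \<Longrightarrow> \<alpha> x \<in> Rg i" using assms(4) by blast
  have gb: "\<And>x i. x \<in> Rg i \<Longrightarrow> \<beta> x \<in> Rg i" using assms(5) by blast
  have abr: "\<And>a b n. \<alpha> (br a b n) = br (\<alpha> a) (\<alpha> b) n" using assms(9) by blast
  have bbr: "\<And>a b n. \<beta> (br a b n) = br (\<beta> a) (\<beta> b) n" using assms(10) by blast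
  have aev: "\<And>a b l. \<alpha> (ev scl (br a b) l) = ev scl (br (\<alpha> a) (\<alpha> b)) l"
    using ev_linear[OF assms(2) fin] abr by simp
  have bev: "\<And>a b l. \<beta> (ev scl (br a b) l) = ev scl (br (\<beta> a) (\<beta> b)) l"
    using ev_linear[OF assms(3) fin] bbr by simp
  have G2: "graded_lambda_map scl Rg (\<lambda>a b. br (\<alpha> a) (\<beta> b))"
    unfolding graded_lambda_map_def
  proof (intro conjI allI impI)
    fix a b show "finite {n. br (\<alpha> a) (\<beta> b) n \<noteq> 0}" by (rule fin)
  next
    fix a n show "Vector_Spaces.linear scl scl (\<lambda>b. br (\<alpha> a) (\<beta> b) n)"
      using Vector_Spaces.linear_compose[OF assms(3) linb[of "\<alpha> a" n]] by (simp add: comp_def)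
  next
    fix b n show "Vector_Spaces.linear scl scl (\<lambda>a. br (\<alpha> a) (\<beta> b) n)"
      using Vector_Spaces.linear_compose[OF assms(2) lina[of "\<beta> b" n]] by (simp add: comp_def)
  next
    fix i j a b n assume "a \<in> Rg i" "b \<in> Rg j"
    then show "br (\<alpha> a) (\<beta> b) n \<in> Rg (i \<noteq> j)" by (intro grd ga gb)
  qed
  have S2: "sesquilinear scl D (\<lambda>a b. br (\<alpha> a) (\<beta> b))"
    using ses unfolding sesquilinear_def by (simp add: aD bD)
  show ?thesis
    unfolding BiHom_LCSA_def
  proof (intro conjI allI impI)
    show "graded_CD_module scl D Rg" by (rule gm)
    show "graded_lambda_map scl Rg (\<lambda>a b. br (\<alpha> a) (\<beta> b))" by (rule G2)
    show "Vector_Spaces.linear scl scl \<alpha>" by (rule assms(2))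
    show "Vector_Spaces.linear scl scl \<beta>" by (rule assms(3))
    show "\<alpha> \<circ> \<beta> = \<beta> \<circ> \<alpha>" "\<alpha> \<circ> D = D \<circ> \<alpha>" "\<beta> \<circ> D = D \<circ> \<beta>" by (rule assms)+
    show "sesquilinear scl D (\<lambda>a b. br (\<alpha> a) (\<beta> b))" by (rule S2)
  next
    fix a b n show "\<alpha> (br (\<alpha> a) (\<beta> b) n) = br (\<alpha> (\<alpha> a)) (\<beta> (\<alpha> b)) n" by (simp add: abr ab)
  next
    fix a b n show "\<beta> (br (\<alpha> a) (\<beta> b) n) = br (\<alpha> (\<beta> a)) (\<beta> (\<beta> b)) n" by (simp add: bbr ab)
  next
    fix i j a b l assume "a \<in> Rg i" "b \<in> Rg j"
    then show "ev scl (br (\<alpha> (\<beta> a)) (\<beta> (\<alpha> b))) l =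
       - scl (psign i j) (evop scl D (br (\<alpha> (\<beta> b)) (\<beta> (\<alpha> a))) l)"
    proof -
      have "\<alpha> (\<beta> a) \<in> Rg i" "\<beta> (\<alpha> b) \<in> Rg j" using \<open>a \<in> Rg i\<close> \<open>b \<in> Rg j\<close> ga gb by blast+
      from skew[rule_format, OF this, of l] show ?thesis by (simp only: ab)
    qed
  next
    fix i j k a b c l m assume h: "a \<in> Rg i" "b \<in> Rg j" "c \<in> Rg k"
    have A: "\<alpha> (\<alpha> (\<beta> a)) \<in> Rg i" "\<beta> (\<alpha> b) \<in> Rg j" "\<beta> (\<beta> c) \<in> Rg k"
      using h ga gb by blast+
    show "ev scl (br (\<alpha> (\<alpha> (\<beta> a))) (\<beta> (ev scl (br (\<alpha> b) (\<beta> c)) m))) l =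
       ev scl (br (\<alpha> (ev scl (br (\<alpha> (\<beta> a)) (\<beta> b)) l)) (\<beta> (\<beta> c))) (l + m) +
       scl (psign i j) (ev scl (br (\<alpha> (\<beta> b)) (\<beta> (ev scl (br (\<alpha> (\<alpha> a)) (\<beta> c)) l))) m)"
      using jac[rule_format, OF A, of m l] by (simp only: aev bev ab)
  qed
qed

end
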